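(* Let $H$, $d$, $(X,\mu)$, $\mathcal{A}$, $(N_s)$, $\delta_r,s_r,\sigma_s$ be as in the context and fix an integer $r\ge3$. Fix $0\le\alpha<\beta$ and an integer $s>s_r+r$. Then for any partition $\mathcal{Q}$ of $[r]$, any $\underline h\in\Delta_{\mathcal{Q}}(\alpha,\beta)$, any $f\in\mathcal{A}$ and any $\mathcal{P}\in\mathfrak{P}_{[r]}$, $$|\widetilde\psi_{f,\underline h}(\mathcal{P})-\widetilde\psi^{\mathcal{Q}}_{f,\underline h}(\mathcal{P})|\le C_{r,s}\,e^{-(\beta\delta_r-r\alpha\sigma_s)}N_s(f)^r,$$ where $C_{r,s}$ depends only on $r$ and $s$.
   Context: $H$ is a locally compact second countable group with left-invariant metric $d$, acting measure-preservingly on a probability space $(X,\mu)$; $h\cdot f=f\circ h^{-1}$. $\mathcal{A}\subset L^\infty(X,\mu)$ is an $H$-invariant subalgebra and $(N_s)_{s\ge1}$ seminorms on it with (constants depending only on $s$): $N_s(f)\ll N_{s+1}(f)$; $\|f\|_{L^\infty}\ll N_s(f)$; $N_s(h\cdot f)\ll e^{\sigma_s d(h,e)}N_s(f)$ for some $\sigma_s>0$; $N_s(f_1f_2)\ll N_{s+1}(f_1)N_{s+1}(f_2)$. Exponential mixing of all orders: for every $k\ge2$ there are $\delta_k>0$ and an integer $s_k>0$ with $\big|\mu(\prod_{i=1}^k h_i\cdot f_i)-\prod_i\mu(f_i)\big|\ll_{k,s}e^{-\delta_k\min_{i\ne j}d(h_i,h_j)}\prod_iN_s(f_i)$ for all $s>s_k$,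 $f_i\in\mathcal{A}$, $h_i\in H$; $(\sigma_s)$, $(s_k)$ increasing, $(\delta_k)$ decreasing, $\delta_k<k\sigma_s$. Distances: $d^I(\underline h)=\max_{i,j\in I}d(h_i,h_j)$, $d_{I,J}(\underline h)=\min_{i\in I,j\in J}d(h_i,h_j)$, $d^{\mathcal{Q}}=\max_{I\in\mathcal{Q}}d^I$, $d_{\mathcal{Q}}=\min\{d_{I,J}:I\ne J\in\mathcal{Q}\}$, $\Delta_{\mathcal{Q}}(\alpha,\beta)=\{\underline h\in H^r:d^{\mathcal{Q}}(\underline h)\le\alpha,\ d_{\mathcal{Q}}(\underline h)>\beta\}$. $\mathfrak{P}_{[r]}$ is the set of cyclically ordered partitions of $[r]$ (partitions into non-empty blocks with a cyclic order on blocks). For $f\in\mathcal{A}$, $\underline h\in H^r$: $\psi_{f,\underline h}(I)=\mu(\prod_{i\in I}h_i\cdot f)$ for $I\ne\emptyset$, $\psi_{f,\underline h}(\emptyset)=1$; $\psi^{\mathcal{Q}}(I)=\prod_{J\in\mathcal{Q}}\psi(I\cap J)$; $\widetilde\psi(\mathcal{P})=\prod_{I\in\mathcal{P}}\psi(I)$, $\widetilde\psi^{\mathcal{Q}}(\mathcal{P})=\prod_{I\in\mathcal{P}}\psi^{\mathcal{Q}}(I)$. *)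

theory Defs
  imports "HOL-Probability.Probability"
begin

text \<open>H is a locally compact second countable (topological) group, written additively
(group_add is not assumed commutative), whose topology is induced by the metric
dist, which is left-invariant. The identity e is 0.\<close>

definition lcsc_left_inv_metric_group :: "'h::{group_add,metric_space} itself \<Rightarrow> bool" where
  "lcsc_left_inv_metric_group _ \<longleftrightarrow>
     locally compact (UNIV :: 'h set) \<and>
     (\<exists>\<B>::'h set set. countable \<B> \<and> topological_basis \<B>) \<and>
     continuous_on UNIV (\<lambda>p::'h \<times> 'h. fst p + snd p) \<and>
     continuous_on UNIV (\<lambda>x::'h. - x) \<and>
     (\<forall>g x y::'h. dist (g + x) (g + y) = dist x y)"

definition mp_action :: "'x measure \<Rightarrow> ('h::group_add \<Rightarrow> 'x \<Rightarrow> 'x) \<Rightarrow> bool" where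
  "mp_action M act \<longleftrightarrow>
     (\<forall>g. act g \<in> M \<rightarrow>\<^sub>M M \<and> distr M M (act g) = M) \<and>
     (\<forall>x\<in>space M. act 0 x = x) \<and>
     (\<forall>g g'. \<forall>x\<in>space M. act (g + g') x = act g (act g' x))"

definition hdot :: "('h::group_add \<Rightarrow> 'x \<Rightarrow> 'x) \<Rightarrow> 'h \<Rightarrow> ('x \<Rightarrow> real) \<Rightarrow> 'x \<Rightarrow> real" where
  "hdot act g f = (\<lambda>x. f (act (- g) x))"

definition invariant_subalgebra ::
  "'x measure \<Rightarrow> ('h::group_add \<Rightarrow> 'x \<Rightarrow> 'x) \<Rightarrow> ('x \<Rightarrow> real) set \<Rightarrow> bool" where
  "invariant_subalgebra M act A \<longleftrightarrow>
     (\<forall>f\<in>A. f \<in> borel_measurable M \<and> (\<exists>B. AE x in M. \<bar>f x\<bar> \<le> B)) \<and>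
     (\<forall>f\<in>A. \<forall>g\<in>A. (\<lambda>x. f x + g x) \<in> A \<and> (\<lambda>x. f x * g x) \<in> A) \<and>
     (\<forall>f\<in>A. \<forall>c::real. (\<lambda>x. c * f x) \<in> A) \<and>
     (\<forall>f\<in>A. \<forall>h. hdot act h f \<in> A)"

text \<open>Each N_s (s \<ge> 1) is a seminorm on A, with the standing properties; every
\<open>\<ll>\<close> is an inequality up to a constant depending only on s.\<close>
definition seminorm_family ::
  "'x measure \<Rightarrow> ('h::{group_add,metric_space} \<Rightarrow> 'x \<Rightarrow> 'x) \<Rightarrow> ('x \<Rightarrow> real) set
     \<Rightarrow> (nat \<Rightarrow> ('x \<Rightarrow> real) \<Rightarrow> real) \<Rightarrow> (nat \<Rightarrow> real) \<Rightarrow> bool" where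
  "seminorm_family M act A N \<sigma> \<longleftrightarrow>
     (\<forall>s\<ge>1. \<forall>f\<in>A. \<forall>g\<in>A. \<forall>c::real.
        N s f \<ge> 0 \<and> N s (\<lambda>x. c * f x) = \<bar>c\<bar> * N s f \<and>
        N s (\<lambda>x. f x + g x) \<le> N s f + N s g) \<and>
     (\<forall>s\<ge>1. \<exists>C. \<forall>f\<in>A. N s f \<le> C * N (s + 1) f) \<and>
     (\<forall>s\<ge>1. \<exists>C. \<forall>f\<in>A. AE x in M. \<bar>f x\<bar> \<le> C * N s f) \<and>
     (\<forall>s\<ge>1. \<sigma> s > 0) \<and>
     (\<forall>s\<ge>1. \<exists>C. \<forall>f\<in>A. \<forall>h. N s (hdot act h f) \<le> C * exp (\<sigma> s * dist h 0) * N s f) \<and>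
     (\<forall>s\<ge>1. \<exists>C. \<forall>f1\<in>A. \<forall>f2\<in>A.
        N s (\<lambda>x. f1 x * f2 x) \<le> C * N (s + 1) f1 * N (s + 1) f2)"

definition exp_mixing_all_orders ::
  "'x measure \<Rightarrow> ('h::{group_add,metric_space} \<Rightarrow> 'x \<Rightarrow> 'x) \<Rightarrow> ('x \<Rightarrow> real) set
     \<Rightarrow> (nat \<Rightarrow> ('x \<Rightarrow> real) \<Rightarrow> real) \<Rightarrow> (nat \<Rightarrow> real) \<Rightarrow> (nat \<Rightarrow> nat) \<Rightarrow> bool" where
  "exp_mixing_all_orders M act A N \<delta> sk \<longleftrightarrow>
     (\<forall>k\<ge>2. \<delta> k > 0 \<and> sk k > 0 \<and>
        (\<forall>s>sk k. \<exists>C. \<forall>fs hs.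
           (\<forall>i\<in>{1..k}. fs i \<in> A) \<longrightarrow>
           \<bar>integral\<^sup>L M (\<lambda>x. \<Prod>i\<in>{1..k}. hdot act (hs i) (fs i) x)
              - (\<Prod>i\<in>{1..k}. integral\<^sup>L M (fs i))\<bar>
           \<le> C * exp (- \<delta> k * Min {dist (hs i) (hs j) | i j. i \<in> {1..k} \<and> j \<in> {1..k} \<and> i \<noteq> j})
               * (\<Prod>i\<in>{1..k}. N s (fs i))))"

definition parameter_conventions :: "(nat \<Rightarrow> real) \<Rightarrow> (nat \<Rightarrow> nat) \<Rightarrow> (nat \<Rightarrow> real) \<Rightarrow> bool" where
  "parameter_conventions \<sigma> sk \<delta> \<longleftrightarrow>
     (\<forall>s t. 1 \<le> s \<longrightarrow> s \<le> t \<longrightarrow> \<sigma> s \<le> \<sigma> t) \<and>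
     (\<forall>k l. 2 \<le> k \<longrightarrow> k \<le> l \<longrightarrow> sk k \<le> sk l) \<and>
     (\<forall>k l. 2 \<le> k \<longrightarrow> k \<le> l \<longrightarrow> \<delta> l \<le> \<delta> k) \<and>
     (\<forall>k s. 2 \<le> k \<longrightarrow> 1 \<le> s \<longrightarrow> \<delta> k < real k * \<sigma> s)"

text \<open>d^Q(h) = max over blocks I of the diameter of {h_i : i \<in> I};
 d_Q(h) = min over distinct blocks of the distance between them (= +\<infinity> if Q has one block).\<close>
definition d_up :: "nat set set \<Rightarrow> (nat \<Rightarrow> 'h::metric_space) \<Rightarrow> ereal" where
  "d_up Q h = Sup {ereal (dist (h i) (h j)) | I i j. I \<in> Q \<and> i \<in> I \<and> j \<in> I}"

definition d_low :: "nat set set \<Rightarrow> (nat \<Rightarrow> 'h::metric_space) \<Rightarrow> ereal" where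
  "d_low Q h = Inf {ereal (dist (h i) (h j)) | I J i j. I \<in> Q \<and> J \<in> Q \<and> I \<noteq> J \<and> i \<in> I \<and> j \<in> J}"

definition Delta :: "nat set set \<Rightarrow> real \<Rightarrow> real \<Rightarrow> (nat \<Rightarrow> 'h::metric_space) set" where
  "Delta Q \<alpha> \<beta> = {h. d_up Q h \<le> ereal \<alpha> \<and> d_low Q h > ereal \<beta>}"

text \<open>Cyclically ordered partitions of [r] = {1..r}: a cyclic order on the blocks is
represented by any of its linearisations, i.e. a list of distinct blocks.\<close>
definition cyc_partitions :: "nat \<Rightarrow> nat set list set" where
  "cyc_partitions r = {Ps. distinct Ps \<and> partition_on {1..r} (set Ps)}"

definition psi :: "'x measure \<Rightarrow> ('h::group_add \<Rightarrow> 'x \<Rightarrow> 'x) \<Rightarrow> ('x \<Rightarrow> real)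
    \<Rightarrow> (nat \<Rightarrow> 'h) \<Rightarrow> nat set \<Rightarrow> real" where
  "psi M act f h I = (if I = {} then 1 else integral\<^sup>L M (\<lambda>x. \<Prod>i\<in>I. hdot act (h i) f x))"

definition psiQ :: "'x measure \<Rightarrow> ('h::group_add \<Rightarrow> 'x \<Rightarrow> 'x) \<Rightarrow> ('x \<Rightarrow> real)
    \<Rightarrow> (nat \<Rightarrow> 'h) \<Rightarrow> nat set set \<Rightarrow> nat set \<Rightarrow> real" where
  "psiQ M act f h Q I = (\<Prod>J\<in>Q. psi M act f h (I \<inter> J))"

definition psi_tilde :: "'x measure \<Rightarrow> ('h::group_add \<Rightarrow> 'x \<Rightarrow> 'x) \<Rightarrow> ('x \<Rightarrow> real)
    \<Rightarrow> (nat \<Rightarrow> 'h) \<Rightarrow> nat set list \<Rightarrow> real" where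
  "psi_tilde M act f h P = (\<Prod>I\<in>set P. psi M act f h I)"

definition psiQ_tilde :: "'x measure \<Rightarrow> ('h::group_add \<Rightarrow> 'x \<Rightarrow> 'x) \<Rightarrow> ('x \<Rightarrow> real)
    \<Rightarrow> (nat \<Rightarrow> 'h) \<Rightarrow> nat set set \<Rightarrow> nat set list \<Rightarrow> real" where
  "psiQ_tilde M act f h Q P = (\<Prod>I\<in>set P. psiQ M act f h Q I)"

end

theory Submission
  imports Defs
begin
lemma telescope:
  fixes a b K :: "'i \<Rightarrow> real"
  assumes "finite B" "\<And>I. I \<in> B \<Longrightarrow> \<bar>a I\<bar> \<le> K I \<and> \<bar>b I\<bar> \<le> K I"
  shows "\<bar>(\<Prod>I\<in>B. a I) - (\<Prod>I\<in>B. b I)\<bar> \<le> (\<Sum>I\<in>B. \<bar>a I - b I\<bar> * (\<Prod>I'\<in>B-{I}. K I'))"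
  using assms
proof (induction B rule: finite_induct)
  case empty
  then show ?case by simp
next
  case (insert x F)
  have IH: "\<bar>(\<Prod>I\<in>F. a I) - (\<Prod>I\<in>F. b I)\<bar> \<le> (\<Sum>I\<in>F. \<bar>a I - b I\<bar> * (\<Prod>I'\<in>F-{I}. K I'))"
    using insert by auto
  have ax: "\<bar>a x\<bar> \<le> K x" "\<bar>b x\<bar> \<le> K x" using insert by auto
  have Kn: "\<And>I. I \<in> insert x F \<Longrightarrow> 0 \<le> K I" using insert(4) by (meson abs_ge_zero order_trans)
  have pb: "\<bar>\<Prod>I\<in>F. b I\<bar> \<le> (\<Prod>I\<in>F. K I)"
    unfolding abs_prod by (rule prod_mono) (use insert in auto)
  have eq: "(\<Prod>I\<in>insert x F. a I) - (\<Prod>I\<in>insert x F. b I)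
      = a x * ((\<Prod>I\<in>F. a I) - (\<Prod>I\<in>F. b I)) + (a x - b x) * (\<Prod>I\<in>F. b I)"
    using insert by (simp add: algebra_simps)
  have "\<bar>(\<Prod>I\<in>insert x F. a I) - (\<Prod>I\<in>insert x F. b I)\<bar>
      \<le> \<bar>a x\<bar> * \<bar>(\<Prod>I\<in>F. a I) - (\<Prod>I\<in>F. b I)\<bar> + \<bar>a x - b x\<bar> * \<bar>\<Prod>I\<in>F. b I\<bar>"
    unfolding eq by (metis abs_mult abs_triangle_ineq)
  also have "\<dots> \<le> K x * (\<Sum>I\<in>F. \<bar>a I - b I\<bar> * (\<Prod>I'\<in>F-{I}. K I')) + \<bar>a x - b x\<bar> * (\<Prod>I\<in>F. K I)"
    by (intro add_mono mult_mono IH ax pb) (auto intro: Kn)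
  also have "\<dots> = (\<Sum>I\<in>insert x F. \<bar>a I - b I\<bar> * (\<Prod>I'\<in>insert x F-{I}. K I'))"
  proof -
    have "\<And>I. I \<in> F \<Longrightarrow> (\<Prod>I'\<in>insert x F-{I}. K I') = K x * (\<Prod>I'\<in>F-{I}. K I')"
    proof -
      fix I assume "I \<in> F"
      then have "insert x F - {I} = insert x (F - {I})" using insert by auto
      then show "(\<Prod>I'\<in>insert x F-{I}. K I') = K x * (\<Prod>I'\<in>F-{I}. K I')"
        using insert by simp
    qed
    then have "(\<Sum>I\<in>F. \<bar>a I - b I\<bar> * (\<Prod>I'\<in>insert x F-{I}. K I')) = K x * (\<Sum>I\<in>F. \<bar>a I - b I\<bar> * (\<Prod>I'\<in>F-{I}. K I'))"
      by (simp add: sum_distrib_left algebra_simps)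
    moreover have "insert x F - {x} = F" using insert by auto
    ultimately show ?thesis using insert by simp
  qed
  finally show ?case .
qed

lemma prod_hdot_in_A:
  assumes "invariant_subalgebra M act A" "f \<in> A" "finite S" "S \<noteq> {}"
  shows "(\<lambda>x. \<Prod>i\<in>S. hdot act (u i) f x) \<in> A"
  using assms(3,4)
proof (induction S rule: finite_ne_induct)
  case (singleton x)
  then show ?case using assms(1,2) unfolding invariant_subalgebra_def by simp
next
  case (insert x F)
  have "hdot act (u x) f \<in> A" using assms(1,2) unfolding invariant_subalgebra_def by simp
  then have "(\<lambda>y. hdot act (u x) f y * (\<Prod>i\<in>F. hdot act (u i) f y)) \<in> A"
  proof -
    have cl: "\<forall>f\<in>A. \<forall>g\<in>A. (\<lambda>x. f x * g x) \<in> A"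
      using assms(1) unfolding invariant_subalgebra_def by blast
    show ?thesis by (rule cl[rule_format]) (fact+)
  qed
  then show ?case using insert by simp
qed

lemma mp_meas:
  assumes "mp_action M act"
  shows "act g \<in> M \<rightarrow>\<^sub>M M" "distr M M (act g) = M"
  using assms unfolding mp_action_def by auto

lemma integral_hdot:
  assumes "mp_action M act" "F \<in> borel_measurable M"
  shows "integral\<^sup>L M (hdot act g F) = integral\<^sup>L M F"
proof -
  have "integral\<^sup>L M F = integral\<^sup>L (distr M M (act (-g))) F"
    using mp_meas(2)[OF assms(1)] by simp
  also have "\<dots> = integral\<^sup>L M (\<lambda>x. F (act (-g) x))"
    by (rule integral_distr[OF mp_meas(1)[OF assms(1)] assms(2)])
  finally show ?thesis unfolding hdot_def by simp
qed

lemma AE_hdot: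
  assumes "mp_action M act" "F \<in> borel_measurable M" "AE x in M. \<bar>F x\<bar> \<le> B"
  shows "AE x in M. \<bar>hdot act g F x\<bar> \<le> B"
proof -
  have "AE x in distr M M (act (-g)). \<bar>F x\<bar> \<le> B"
    unfolding mp_meas(2)[OF assms(1), of "-g"] by (rule assms(3))
  then have "AE x in M. \<bar>F (act (-g) x)\<bar> \<le> B"
    by (subst (asm) AE_distr_iff[OF mp_meas(1)[OF assms(1)]]) (use assms(2) in measurable)
  then show ?thesis unfolding hdot_def by simp
qed

lemma hdot_shift:
  assumes "mp_action M act" "x \<in> space M"
  shows "hdot act a (\<lambda>y. \<Prod>i\<in>S. hdot act (- a + u i) f y) x = (\<Prod>i\<in>S. hdot act (u i) f x)"
proof -
  have "\<And>i. act (-(- a + u i)) (act (-a) x) = act (- u i) x"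
  proof -
    fix i
    have comp: "\<forall>g g'. \<forall>x\<in>space M. act (g + g') x = act g (act g' x)"
      using assms unfolding mp_action_def by blast
    have "act (-(- a + u i)) (act (-a) x) = act (-(- a + u i) + - a) x"
      using comp[rule_format, OF assms(2), of "-(- a + u i)" "- a"] by simp
    also have "-(- a + u i) + - a = - u i" by (simp add: minus_add add.assoc)
    finally show "act (-(- a + u i)) (act (-a) x) = act (- u i) x" .
  qed
  then show ?thesis unfolding hdot_def by simp
qed

lemma dist_shift:
  assumes "lcsc_left_inv_metric_group TYPE('h::{group_add,metric_space})"
  shows "dist (- (a::'h) + b) 0 = dist b a"
proof -
  have "dist (- a + b) 0 = dist (- a + b) (- a + a)" by simp
  also have "\<dots> = dist b a" using assms unfolding lcsc_left_inv_metric_group_def by blast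
  finally show ?thesis .
qed

lemma prod_in_A:
  assumes "invariant_subalgebra M act A" "finite S" "S \<noteq> {}" "\<forall>i\<in>S. u i \<in> A"
  shows "(\<lambda>x. \<Prod>i\<in>S. u i x) \<in> A"
  using assms(2,3,4)
proof (induction S rule: finite_ne_induct)
  case (singleton x)
  then show ?case by simp
next
  case (insert x F)
  have cl: "\<forall>f\<in>A. \<forall>g\<in>A. (\<lambda>x. f x * g x) \<in> A"
    using assms(1) unfolding invariant_subalgebra_def by blast
  have "(\<lambda>y. u x y * (\<Prod>i\<in>F. u i y)) \<in> A"
    by (rule cl[rule_format]) (use insert in auto)
  then show ?case using insert by simp
qed

lemma hdot_in_A:
  assumes "invariant_subalgebra M act A" "f \<in> A"
  shows "hdot act g f \<in> A"
  using assms unfolding invariant_subalgebra_def by blast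

context
  fixes M :: "'x measure" and act :: "'h::{group_add,metric_space} \<Rightarrow> 'x \<Rightarrow> 'x"
    and A N \<sigma>
  assumes SF: "seminorm_family M act A N \<sigma>" and IA: "invariant_subalgebra M act A"
begin

lemma N_nonneg: "s \<ge> 1 \<Longrightarrow> f \<in> A \<Longrightarrow> N s f \<ge> 0"
  using SF unfolding seminorm_family_def by blast

lemma N_step: "s \<ge> 1 \<Longrightarrow> \<exists>C\<ge>0. \<forall>f\<in>A. N s f \<le> C * N (s + 1) f"
proof -
  assume s: "s \<ge> 1"
  then obtain C where C: "\<forall>f\<in>A. N s f \<le> C * N (s + 1) f"
    using SF unfolding seminorm_family_def by blast
  have "\<forall>f\<in>A. N s f \<le> max C 0 * N (s + 1) f"
  proof
    fix f assume f: "f \<in> A"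
    have "C * N (s+1) f \<le> max C 0 * N (s + 1) f"
      by (rule mult_right_mono) (use N_nonneg[OF _ f, of "s+1"] s in auto)
    then show "N s f \<le> max C 0 * N (s + 1) f" using C f by auto
  qed
  then show ?thesis by (intro exI[of _ "max C 0"]) auto
qed

lemma N_mono: "s \<ge> 1 \<Longrightarrow> \<exists>C\<ge>0. \<forall>f\<in>A. N s f \<le> C * N (s + d) f"
proof (induction d)
  case 0
  then show ?case by (intro exI[of _ 1]) auto
next
  case (Suc d)
  then obtain C where C: "C \<ge> 0" "\<forall>f\<in>A. N s f \<le> C * N (s + d) f" by blast
  obtain C' where C': "C' \<ge> 0" "\<forall>f\<in>A. N (s+d) f \<le> C' * N (s + d + 1) f"
    using N_step[of "s+d"] Suc by auto
  have "\<forall>f\<in>A. N s f \<le> (C * C') * N (s + Suc d) f"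
  proof
    fix f assume f: "f \<in> A"
    have "N s f \<le> C * N (s + d) f" using C f by auto
    also have "\<dots> \<le> C * (C' * N (s + d + 1) f)"
      by (rule mult_left_mono) (use C C' f in auto)
    finally show "N s f \<le> (C * C') * N (s + Suc d) f" by simp
  qed
  then show ?case using C C' by (intro exI[of _ "C*C'"]) auto
qed

lemma N_Linf: "s \<ge> 1 \<Longrightarrow> \<exists>C\<ge>1. \<forall>f\<in>A. AE x in M. \<bar>f x\<bar> \<le> C * N s f"
proof -
  assume s: "s \<ge> 1"
  then obtain C where C: "\<forall>f\<in>A. AE x in M. \<bar>f x\<bar> \<le> C * N s f"
    using SF unfolding seminorm_family_def by blast
  have "\<forall>f\<in>A. AE x in M. \<bar>f x\<bar> \<le> max C 1 * N s f"
  proof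
    fix f assume f: "f \<in> A"
    have "C * N s f \<le> max C 1 * N s f"
      by (rule mult_right_mono) (use N_nonneg[OF s f] in auto)
    then show "AE x in M. \<bar>f x\<bar> \<le> max C 1 * N s f" using C f by (auto elim: AE_mp)
  qed
  then show ?thesis by (intro exI[of _ "max C 1"]) auto
qed

lemma N_hdot: "s \<ge> 1 \<Longrightarrow> \<exists>C\<ge>0. \<forall>f\<in>A. \<forall>h. N s (hdot act h f) \<le> C * exp (\<sigma> s * dist h 0) * N s f"
proof -
  assume s: "s \<ge> 1"
  then obtain C where C: "\<forall>f\<in>A. \<forall>h. N s (hdot act h f) \<le> C * exp (\<sigma> s * dist h 0) * N s f"
    using SF unfolding seminorm_family_def by blast
  have "\<forall>f\<in>A. \<forall>h. N s (hdot act h f) \<le> max C 0 * exp (\<sigma> s * dist h 0) * N s f"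
  proof (intro ballI allI)
    fix f and h :: 'h assume f: "f \<in> A"
    have "C * exp (\<sigma> s * dist h 0) * N s f \<le> max C 0 * exp (\<sigma> s * dist h 0) * N s f"
      by (intro mult_right_mono) (use N_nonneg[OF s f] in auto)
    moreover have "N s (hdot act h f) \<le> C * exp (\<sigma> s * dist h 0) * N s f" using C f by blast
    ultimately show "N s (hdot act h f) \<le> max C 0 * exp (\<sigma> s * dist h 0) * N s f" by linarith
  qed
  then show ?thesis by (intro exI[of _ "max C 0"]) auto
qed

lemma N_mult: "s \<ge> 1 \<Longrightarrow> \<exists>C\<ge>0. \<forall>f1\<in>A. \<forall>f2\<in>A. N s (\<lambda>x. f1 x * f2 x) \<le> C * N (s + 1) f1 * N (s + 1) f2"
proof -
  assume s: "s \<ge> 1"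
  then obtain C where C: "\<forall>f1\<in>A. \<forall>f2\<in>A. N s (\<lambda>x. f1 x * f2 x) \<le> C * N (s + 1) f1 * N (s + 1) f2"
    using SF unfolding seminorm_family_def by blast
  have "\<forall>f1\<in>A. \<forall>f2\<in>A. N s (\<lambda>x. f1 x * f2 x) \<le> max C 0 * N (s + 1) f1 * N (s + 1) f2"
  proof (intro ballI)
    fix f1 f2 assume f: "f1 \<in> A" "f2 \<in> A"
    have "C * N (s + 1) f1 * N (s + 1) f2 \<le> max C 0 * N (s + 1) f1 * N (s + 1) f2"
      by (intro mult_right_mono) (use N_nonneg[OF _ f(1), of "s+1"] N_nonneg[OF _ f(2), of "s+1"] in auto)
    then show "N s (\<lambda>x. f1 x * f2 x) \<le> max C 0 * N (s + 1) f1 * N (s + 1) f2" using C f by force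
  qed
  then show ?thesis by (intro exI[of _ "max C 0"]) auto
qed

lemma N_prod:
  assumes "m \<ge> 1"
  shows "\<forall>t\<ge>1. \<exists>C\<ge>0. \<forall>(S::nat set) u. finite S \<and> card S = m \<and> (\<forall>i\<in>S. u i \<in> A) \<longrightarrow>
           N t (\<lambda>x. \<Prod>i\<in>S. u i x) \<le> C * (\<Prod>i\<in>S. N (t + m) (u i))"
  using assms
proof (induction m rule: nat_induct_at_least)
  case base
  show ?case
  proof (intro allI impI)
    fix t :: nat assume t: "t \<ge> 1"
    obtain C where C: "C \<ge> 0" "\<forall>f\<in>A. N t f \<le> C * N (t + 1) f" using N_step[OF t] by blast
    show "\<exists>C\<ge>0. \<forall>(S::nat set) u. finite S \<and> card S = 1 \<and> (\<forall>i\<in>S. u i \<in> A) \<longrightarrow>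
           N t (\<lambda>x. \<Prod>i\<in>S. u i x) \<le> C * (\<Prod>i\<in>S. N (t + 1) (u i))"
    proof (intro exI[of _ C] conjI allI impI)
      fix S :: "nat set" and u assume "finite S \<and> card S = 1 \<and> (\<forall>i\<in>S. u i \<in> A)"
      then obtain a where "S = {a}" "u a \<in> A" by (auto simp: card_1_singleton_iff)
      then show "N t (\<lambda>x. \<Prod>i\<in>S. u i x) \<le> C * (\<Prod>i\<in>S. N (t + 1) (u i))"
        using C by simp
    qed fact
  qed
next
  case (Suc m)
  show ?case
  proof (intro allI impI)
    fix t :: nat assume t: "t \<ge> 1"
    obtain C1 where C1: "C1 \<ge> 0" "\<forall>f1\<in>A. \<forall>f2\<in>A. N t (\<lambda>x. f1 x * f2 x) \<le> C1 * N (t + 1) f1 * N (t + 1) f2"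
      using N_mult[OF t] by blast
    obtain C2 where C2: "C2 \<ge> 0" "\<forall>f\<in>A. N (t+1) f \<le> C2 * N (t + 1 + m) f"
      using N_mono[of "t+1" m] by auto
    have ih: "\<exists>C\<ge>0. \<forall>(S::nat set) u. finite S \<and> card S = m \<and> (\<forall>i\<in>S. u i \<in> A) \<longrightarrow>
           N (t+1) (\<lambda>x. \<Prod>i\<in>S. u i x) \<le> C * (\<Prod>i\<in>S. N (t + 1 + m) (u i))"
      by (rule Suc.IH[rule_format]) simp
    then obtain C3 where C3: "C3 \<ge> 0" "\<forall>(S::nat set) u. finite S \<and> card S = m \<and> (\<forall>i\<in>S. u i \<in> A) \<longrightarrow>
           N (t+1) (\<lambda>x. \<Prod>i\<in>S. u i x) \<le> C3 * (\<Prod>i\<in>S. N (t + 1 + m) (u i))"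
      by blast
    show "\<exists>C\<ge>0. \<forall>(S::nat set) u. finite S \<and> card S = Suc m \<and> (\<forall>i\<in>S. u i \<in> A) \<longrightarrow>
           N t (\<lambda>x. \<Prod>i\<in>S. u i x) \<le> C * (\<Prod>i\<in>S. N (t + Suc m) (u i))"
    proof (intro exI[of _ "C1 * C2 * C3"] conjI allI impI)
      show "0 \<le> C1 * C2 * C3" using C1 C2 C3 by simp
      fix S :: "nat set" and u assume H: "finite S \<and> card S = Suc m \<and> (\<forall>i\<in>S. u i \<in> A)"
      then obtain a S' where S: "S = insert a S'" "a \<notin> S'" "card S' = m" "finite S'"
        by (metis card_Suc_eq finite_insert)
      have S'ne: "S' \<noteq> {}" using S Suc.hyps by auto
      have ua: "u a \<in> A" and uS: "\<forall>i\<in>S'. u i \<in> A" using H S by auto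
      have pA: "(\<lambda>x. \<Prod>i\<in>S'. u i x) \<in> A" by (rule prod_in_A[OF IA S(4) S'ne uS])
      have nn: "\<And>f k. f \<in> A \<Longrightarrow> 0 \<le> N (t + k) f" using N_nonneg t by auto
      have "N t (\<lambda>x. \<Prod>i\<in>S. u i x) = N t (\<lambda>x. u a x * (\<Prod>i\<in>S'. u i x))"
        using S by simp
      also have "\<dots> \<le> C1 * N (t + 1) (u a) * N (t + 1) (\<lambda>x. \<Prod>i\<in>S'. u i x)"
        using C1(2)[rule_format, OF ua pA] by simp
      also have "\<dots> \<le> C1 * (C2 * N (t + 1 + m) (u a)) * (C3 * (\<Prod>i\<in>S'. N (t + 1 + m) (u i)))"
      proof -
        have b1: "N (t+1) (u a) \<le> C2 * N (t+1+m) (u a)" using C2(2) ua by simp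
        have b2: "N (t+1) (\<lambda>x. \<Prod>i\<in>S'. u i x) \<le> C3 * (\<Prod>i\<in>S'. N (t + 1 + m) (u i))"
        proof -
          have pre: "finite S' \<and> card S' = m \<and> (\<forall>i\<in>S'. u i \<in> A)" using S uS by simp
          show ?thesis using C3(2)[rule_format, OF pre] .
        qed
        have n1: "0 \<le> N (t+1) (u a)" "0 \<le> N (t+1) (\<lambda>x. \<Prod>i\<in>S'. u i x)"
          by (rule N_nonneg, simp, fact)+
        have "C1 * N (t + 1) (u a) \<le> C1 * (C2 * N (t + 1 + m) (u a))"
          by (rule mult_left_mono[OF b1 C1(1)])
        moreover have "0 \<le> C1 * (C2 * N (t + 1 + m) (u a))"
        proof -
          have "0 \<le> C2 * N (t + 1 + m) (u a)" using n1(1) b1 by linarith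
          then show ?thesis using C1(1) by simp
        qed
        ultimately show ?thesis using b2 n1 C1(1) by (intro mult_mono[OF _ b2]) simp_all
      qed
      also have "\<dots> = C1 * C2 * C3 * (\<Prod>i\<in>S. N (t + Suc m) (u i))"
        using S by (simp add: algebra_simps)
      finally show "N t (\<lambda>x. \<Prod>i\<in>S. u i x) \<le> C1 * C2 * C3 * (\<Prod>i\<in>S. N (t + Suc m) (u i))" .
    qed
  qed
qed

end

lemma mixing_set:
  assumes EM: "exp_mixing_all_orders M act A N \<delta> sk" and SF: "seminorm_family M act A N \<sigma>" and IA: "invariant_subalgebra M act A"
    and k: "k \<ge> 2" and s': "s' > sk k"
  shows "\<exists>C\<ge>0. \<forall>(K::'j set) fs hs. finite K \<and> card K = k \<and> (\<forall>j\<in>K. fs j \<in> A) \<longrightarrow>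
     \<bar>integral\<^sup>L M (\<lambda>x. \<Prod>j\<in>K. hdot act (hs j) (fs j) x) - (\<Prod>j\<in>K. integral\<^sup>L M (fs j))\<bar>
     \<le> C * exp (- \<delta> k * Min {dist (hs a) (hs b) | a b. a \<in> K \<and> b \<in> K \<and> a \<noteq> b})
         * (\<Prod>j\<in>K. N s' (fs j))"
proof -
  obtain C where C: "\<forall>fs hs. (\<forall>i\<in>{1..k}. fs i \<in> A) \<longrightarrow>
           \<bar>integral\<^sup>L M (\<lambda>x. \<Prod>i\<in>{1..k}. hdot act (hs i) (fs i) x)
              - (\<Prod>i\<in>{1..k}. integral\<^sup>L M (fs i))\<bar>
           \<le> C * exp (- \<delta> k * Min {dist (hs i) (hs j) | i j. i \<in> {1..k} \<and> j \<in> {1..k} \<and> i \<noteq> j})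
               * (\<Prod>i\<in>{1..k}. N s' (fs i))"
    using EM k s' unfolding exp_mixing_all_orders_def by blast
  have s1: "s' \<ge> 1" using s' by simp
  show ?thesis
  proof (intro exI[of _ "max C 0"] conjI allI impI)
    fix K :: "'j set" and fs hs
    assume H: "finite K \<and> card K = k \<and> (\<forall>j\<in>K. fs j \<in> A)"
    obtain e where e: "bij_betw e {1..k} K" using ex_bij_betw_nat_finite_1[of K] H by auto
    have fsA: "\<forall>i\<in>{1..k}. fs (e i) \<in> A" using e H by (auto simp: bij_betw_def)
    have Ce: "\<bar>integral\<^sup>L M (\<lambda>x. \<Prod>i\<in>{1..k}. hdot act (hs (e i)) (fs (e i)) x)
              - (\<Prod>i\<in>{1..k}. integral\<^sup>L M (fs (e i)))\<bar>
           \<le> C * exp (- \<delta> k * Min {dist (hs (e i)) (hs (e j)) | i j. i \<in> {1..k} \<and> j \<in> {1..k} \<and> i \<noteq> j})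
               * (\<Prod>i\<in>{1..k}. N s' (fs (e i)))"
      using C[rule_format, of "\<lambda>i. fs (e i)" "\<lambda>i. hs (e i)"] fsA by blast
    have p1: "\<And>x. (\<Prod>i\<in>{1..k}. hdot act (hs (e i)) (fs (e i)) x) = (\<Prod>j\<in>K. hdot act (hs j) (fs j) x)"
      using prod.reindex_bij_betw[OF e] .
    have p2: "(\<Prod>i\<in>{1..k}. integral\<^sup>L M (fs (e i))) = (\<Prod>j\<in>K. integral\<^sup>L M (fs j))"
      using prod.reindex_bij_betw[OF e] .
    have p3: "(\<Prod>i\<in>{1..k}. N s' (fs (e i))) = (\<Prod>j\<in>K. N s' (fs j))"
      using prod.reindex_bij_betw[OF e] .
    have p4: "{dist (hs (e i)) (hs (e j)) | i j. i \<in> {1..k} \<and> j \<in> {1..k} \<and> i \<noteq> j}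
        = {dist (hs a) (hs b) | a b. a \<in> K \<and> b \<in> K \<and> a \<noteq> b}"
    proof (intro equalityI subsetI)
      fix x assume "x \<in> {dist (hs (e i)) (hs (e j)) | i j. i \<in> {1..k} \<and> j \<in> {1..k} \<and> i \<noteq> j}"
      then obtain i j where ij: "x = dist (hs (e i)) (hs (e j))" "i \<in> {1..k}" "j \<in> {1..k}" "i \<noteq> j" by blast
      have "e i \<in> K" "e j \<in> K" using ij(2,3) bij_betw_apply[OF e] by auto
      moreover have "e i \<noteq> e j" using ij(2,3,4) inj_onD[OF bij_betw_imp_inj_on[OF e]] by blast
      ultimately show "x \<in> {dist (hs a) (hs b) | a b. a \<in> K \<and> b \<in> K \<and> a \<noteq> b}" using ij(1) by blast
    next
      fix x assume "x \<in> {dist (hs a) (hs b) | a b. a \<in> K \<and> b \<in> K \<and> a \<noteq> b}"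
      then obtain a b where ab: "x = dist (hs a) (hs b)" "a \<in> K" "b \<in> K" "a \<noteq> b" by blast
      obtain i where i: "i \<in> {1..k}" "e i = a" using bij_betw_imp_surj_on[OF e] ab by blast
      obtain j where j: "j \<in> {1..k}" "e j = b" using bij_betw_imp_surj_on[OF e] ab by blast
      have "i \<noteq> j" using i j ab by auto
      then show "x \<in> {dist (hs (e i)) (hs (e j)) | i j. i \<in> {1..k} \<and> j \<in> {1..k} \<and> i \<noteq> j}"
        using i j ab by blast
    qed
    have nn: "0 \<le> (\<Prod>j\<in>K. N s' (fs j))"
      using H N_nonneg[OF SF IA s1] by (auto intro!: prod_nonneg)
    have "C * exp (- \<delta> k * Min {dist (hs a) (hs b) | a b. a \<in> K \<and> b \<in> K \<and> a \<noteq> b}) * (\<Prod>j\<in>K. N s' (fs j))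
       \<le> max C 0 * exp (- \<delta> k * Min {dist (hs a) (hs b) | a b. a \<in> K \<and> b \<in> K \<and> a \<noteq> b}) * (\<Prod>j\<in>K. N s' (fs j))"
      by (intro mult_right_mono nn) auto
    then show "\<bar>integral\<^sup>L M (\<lambda>x. \<Prod>j\<in>K. hdot act (hs j) (fs j) x) - (\<Prod>j\<in>K. integral\<^sup>L M (fs j))\<bar>
     \<le> max C 0 * exp (- \<delta> k * Min {dist (hs a) (hs b) | a b. a \<in> K \<and> b \<in> K \<and> a \<noteq> b})
         * (\<Prod>j\<in>K. N s' (fs j))"
      using Ce unfolding p1 p2 p3 p4 by linarith
  qed simp
qed

lemma prodhdot_bound_m:
  fixes act :: "'h::{group_add,metric_space} \<Rightarrow> 'x \<Rightarrow> 'x"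
  assumes SF: "seminorm_family M act A N \<sigma>" and IA: "invariant_subalgebra M act A"
    and smono: "\<forall>a b. 1 \<le> a \<longrightarrow> a \<le> b \<longrightarrow> \<sigma> a \<le> \<sigma> b"
    and t: "t \<ge> 1" and m: "m \<ge> 1" and ts: "t + m \<le> s"
  shows "\<exists>K\<ge>0. \<forall>(S::nat set) (u::nat \<Rightarrow> 'h) f (\<alpha>::real). finite S \<and> card S = m \<and> f \<in> A \<and> 0 \<le> \<alpha> \<and>
       (\<forall>i\<in>S. dist (u i) 0 \<le> \<alpha>) \<longrightarrow>
       N t (\<lambda>x. \<Prod>i\<in>S. hdot act (u i) f x) \<le> K * exp (\<sigma> s * \<alpha>) ^ m * N s f ^ m"
proof -
  obtain CP where CP: "CP \<ge> 0" "\<forall>(S::nat set) u. finite S \<and> card S = m \<and> (\<forall>i\<in>S. u i \<in> A) \<longrightarrow>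
           N t (\<lambda>x. \<Prod>i\<in>S. u i x) \<le> CP * (\<Prod>i\<in>S. N (t + m) (u i))"
    using N_prod[OF SF IA m] t by blast
  obtain CH where CH: "CH \<ge> 0" "\<forall>f\<in>A. \<forall>h. N (t+m) (hdot act h f) \<le> CH * exp (\<sigma> (t+m) * dist h 0) * N (t+m) f"
    using N_hdot[OF SF IA, of "t+m"] t by auto
  obtain CN where CN: "CN \<ge> 0" "\<forall>f\<in>A. N (t+m) f \<le> CN * N (t + m + (s - (t+m))) f"
    using N_mono[OF SF IA, of "t+m" "s - (t+m)"] t by auto
  have tms: "t + m + (s - (t+m)) = s" using ts by simp
  have s1: "s \<ge> 1" using t ts by simp
  have sig: "0 \<le> \<sigma> (t+m)" "\<sigma> (t+m) \<le> \<sigma> s"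
    using SF t smono ts unfolding seminorm_family_def by (auto simp: less_imp_le)
  show ?thesis
  proof (intro exI[of _ "CP * (CH * CN) ^ m"] conjI allI impI)
    show "0 \<le> CP * (CH * CN) ^ m" using CP CH CN by simp
    fix S :: "nat set" and u :: "nat \<Rightarrow> 'h" and f and \<alpha> :: real
    assume H: "finite S \<and> card S = m \<and> f \<in> A \<and> 0 \<le> \<alpha> \<and> (\<forall>i\<in>S. dist (u i) 0 \<le> \<alpha>)"
    have fA: "f \<in> A" using H by simp
    have hA: "\<forall>i\<in>S. hdot act (u i) f \<in> A" using hdot_in_A[OF IA fA] by simp
    have tm1: "Suc 0 \<le> t + m" using assms(4) by simp
    have L0: "0 \<le> N s f" using N_nonneg[OF SF IA s1 fA] .
    have nntm: "0 \<le> N (t+m) f" using N_nonneg[OF SF IA _ fA, of "t+m"] t by simp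
    have fac: "N (t + m) (hdot act (u i) f) \<le> CH * CN * exp (\<sigma> s * \<alpha>) * N s f" if i: "i \<in> S" for i
    proof -
      have "N (t + m) (hdot act (u i) f) \<le> CH * exp (\<sigma> (t+m) * dist (u i) 0) * N (t+m) f"
        by (rule CH(2)[rule_format, OF fA])
      also have "\<dots> \<le> CH * exp (\<sigma> s * \<alpha>) * (CN * N s f)"
      proof (intro mult_mono mult_left_mono)
        have "\<sigma> (t+m) * dist (u i) 0 \<le> \<sigma> s * \<alpha>"
          using H i sig by (intro mult_mono) simp_all
        then show "exp (\<sigma> (t+m) * dist (u i) 0) \<le> exp (\<sigma> s * \<alpha>)" by simp
        show "N (t + m) f \<le> CN * N s f" using CN(2)[rule_format, OF fA] unfolding tms .
      qed (use CH(1) CN(1) L0 nntm in auto)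
      finally show ?thesis by (simp add: algebra_simps)
    qed
    have "N t (\<lambda>x. \<Prod>i\<in>S. hdot act (u i) f x) \<le> CP * (\<Prod>i\<in>S. N (t + m) (hdot act (u i) f))"
    proof -
      have pre: "finite S \<and> card S = m \<and> (\<forall>i\<in>S. hdot act (u i) f \<in> A)" using H hA by simp
      show ?thesis by (rule CP(2)[rule_format, OF pre])
    qed
    also have "\<dots> \<le> CP * (\<Prod>i\<in>S. CH * CN * exp (\<sigma> s * \<alpha>) * N s f)"
      by (intro mult_left_mono prod_mono conjI fac CP(1) N_nonneg[OF SF IA] hdot_in_A[OF IA fA]) (simp_all add: tm1)
    also have "\<dots> = CP * (CH * CN) ^ m * exp (\<sigma> s * \<alpha>) ^ m * N s f ^ m"
      using H by (simp add: power_mult_distrib)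
    finally show "N t (\<lambda>x. \<Prod>i\<in>S. hdot act (u i) f x) \<le> CP * (CH * CN) ^ m * exp (\<sigma> s * \<alpha>) ^ m * N s f ^ m" .
  qed
qed

lemma partition_finite:
  assumes "partition_on X Q" "finite X" shows "finite Q"
proof -
  have "Q \<subseteq> Pow X" using assms(1) unfolding partition_on_def by auto
  then show ?thesis using assms(2) finite_subset by blast
qed

lemma sum_card_inter:
  assumes P: "partition_on X Q" and X: "finite X" and I: "I \<subseteq> X"
  shows "(\<Sum>J\<in>Q. card (I \<inter> J)) = card I"
proof -
  have fQ: "finite Q" using partition_finite[OF P X] .
  have "I = (\<Union>J\<in>Q. I \<inter> J)" using P I unfolding partition_on_def by auto
  moreover have "card (\<Union>J\<in>Q. I \<inter> J) = (\<Sum>J\<in>Q. card (I \<inter> J))"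
  proof (rule card_UN_disjoint[OF fQ])
    show "\<forall>J\<in>Q. finite (I \<inter> J)" using I X finite_subset by blast
    show "\<forall>J\<in>Q. \<forall>J'\<in>Q. J \<noteq> J' \<longrightarrow> I \<inter> J \<inter> (I \<inter> J') = {}"
      using P unfolding partition_on_def disjoint_def by blast
  qed
  ultimately show ?thesis by simp
qed

lemma psi_bound:
  assumes PS: "prob_space M" and MP: "mp_action M act" and IA: "invariant_subalgebra M act A"
    and fA: "f \<in> A" and AEf: "AE x in M. \<bar>f x\<bar> \<le> B" and fin: "finite I"
  shows "\<bar>psi M act f h I\<bar> \<le> B ^ card I"
proof (cases "I = {}")
  case True
  then show ?thesis unfolding psi_def by simp
next
  case False
  define F where "F = (\<lambda>x. \<Prod>i\<in>I. hdot act (h i) f x)"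
  have FA: "F \<in> A" unfolding F_def by (rule prod_hdot_in_A[OF IA fA fin False])
  have Fm: "F \<in> borel_measurable M" using FA IA unfolding invariant_subalgebra_def by blast
  have fm: "f \<in> borel_measurable M" using fA IA unfolding invariant_subalgebra_def by blast
  have "AE x in M. \<forall>i\<in>I. \<bar>hdot act (h i) f x\<bar> \<le> B"
    by (rule AE_finite_allI[OF fin]) (rule AE_hdot[OF MP fm AEf])
  then have AEF: "AE x in M. \<bar>F x\<bar> \<le> B ^ card I"
  proof (rule AE_mp, intro AE_I2 impI)
    fix x assume H: "\<forall>i\<in>I. \<bar>hdot act (h i) f x\<bar> \<le> B"
    have "\<bar>F x\<bar> = (\<Prod>i\<in>I. \<bar>hdot act (h i) f x\<bar>)" unfolding F_def by (simp add: abs_prod)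
    also have "\<dots> \<le> (\<Prod>i\<in>I. B)" by (rule prod_mono) (use H in auto)
    finally show "\<bar>F x\<bar> \<le> B ^ card I" by simp
  qed
  have FM: "finite_measure M" using PS unfolding prob_space_def by blast
  have intF: "integrable M F"
    by (rule finite_measure.integrable_const_bound[OF FM _ Fm]) (use AEF in simp)
  have "\<bar>integral\<^sup>L M F\<bar> \<le> integral\<^sup>L M (\<lambda>x. \<bar>F x\<bar>)" by (rule integral_abs_bound)
  also have "\<dots> \<le> B ^ card I"
    by (rule prob_space.integral_le_const[OF PS]) (use intF AEF in auto)
  finally show ?thesis unfolding psi_def F_def using False by simp
qed

lemma psiQ_bound:
  assumes PS: "prob_space M" and MP: "mp_action M act" and IA: "invariant_subalgebra M act A"
    and fA: "f \<in> A" and AEf: "AE x in M. \<bar>f x\<bar> \<le> B"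
    and P: "partition_on X Q" and X: "finite X" and I: "I \<subseteq> X"
  shows "\<bar>psiQ M act f h Q I\<bar> \<le> B ^ card I"
proof -
  have fQ: "finite Q" using partition_finite[OF P X] .
  have "\<bar>psiQ M act f h Q I\<bar> = (\<Prod>J\<in>Q. \<bar>psi M act f h (I \<inter> J)\<bar>)"
    unfolding psiQ_def by (simp add: abs_prod)
  also have "\<dots> \<le> (\<Prod>J\<in>Q. B ^ card (I \<inter> J))"
  proof (rule prod_mono)
    fix J assume "J \<in> Q"
    have "finite (I \<inter> J)" using I X finite_subset by blast
    then show "0 \<le> \<bar>psi M act f h (I \<inter> J)\<bar> \<and> \<bar>psi M act f h (I \<inter> J)\<bar> \<le> B ^ card (I \<inter> J)"
      using psi_bound[OF PS MP IA fA AEf] by simp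
  qed
  also have "\<dots> = B ^ (\<Sum>J\<in>Q. card (I \<inter> J))" by (simp add: power_sum)
  also have "\<dots> = B ^ card I" using sum_card_inter[OF P X I] by simp
  finally show ?thesis .
qed

lemma prodhdot_bound:
  fixes act :: "'h::{group_add,metric_space} \<Rightarrow> 'x \<Rightarrow> 'x"
  assumes SF: "seminorm_family M act A N \<sigma>" and IA: "invariant_subalgebra M act A"
    and smono: "\<forall>a b. 1 \<le> a \<longrightarrow> a \<le> b \<longrightarrow> \<sigma> a \<le> \<sigma> b"
    and t: "t \<ge> 1" and ts: "t + r \<le> s"
  shows "\<exists>K\<ge>0. \<forall>(S::nat set) (u::nat \<Rightarrow> 'h) f (\<alpha>::real). finite S \<and> S \<noteq> {} \<and> card S \<le> r \<and> f \<in> A \<and> 0 \<le> \<alpha> \<and>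
       (\<forall>i\<in>S. dist (u i) 0 \<le> \<alpha>) \<longrightarrow>
       N t (\<lambda>x. \<Prod>i\<in>S. hdot act (u i) f x) \<le> K * exp (\<sigma> s * \<alpha>) ^ card S * N s f ^ card S"
proof -
  have "\<forall>m. \<exists>K. K \<ge> 0 \<and> (1 \<le> m \<and> m \<le> r \<longrightarrow> (\<forall>(S::nat set) (u::nat \<Rightarrow> 'h) f (\<alpha>::real). finite S \<and> card S = m \<and> f \<in> A \<and> 0 \<le> \<alpha> \<and>
       (\<forall>i\<in>S. dist (u i) 0 \<le> \<alpha>) \<longrightarrow>
       N t (\<lambda>x. \<Prod>i\<in>S. hdot act (u i) f x) \<le> K * exp (\<sigma> s * \<alpha>) ^ m * N s f ^ m))"
  proof
    fix m :: nat
    show "\<exists>K. K \<ge> 0 \<and> (1 \<le> m \<and> m \<le> r \<longrightarrow> (\<forall>(S::nat set) (u::nat \<Rightarrow> 'h) f (\<alpha>::real). finite S \<and> card S = m \<and> f \<in> A \<and> 0 \<le> \<alpha> \<and>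
       (\<forall>i\<in>S. dist (u i) 0 \<le> \<alpha>) \<longrightarrow>
       N t (\<lambda>x. \<Prod>i\<in>S. hdot act (u i) f x) \<le> K * exp (\<sigma> s * \<alpha>) ^ m * N s f ^ m))"
    proof (cases "1 \<le> m \<and> m \<le> r")
      case True
      then have tm: "t + m \<le> s" using ts by simp
      have m1: "m \<ge> 1" using True by simp
      show ?thesis using prodhdot_bound_m[OF SF IA smono t m1 tm] True by blast
    next
      case False
      then show ?thesis by blast
    qed
  qed
  then obtain Kf where Kf: "\<forall>m. Kf m \<ge> 0 \<and> (1 \<le> m \<and> m \<le> r \<longrightarrow> (\<forall>(S::nat set) (u::nat \<Rightarrow> 'h) f (\<alpha>::real). finite S \<and> card S = m \<and> f \<in> A \<and> 0 \<le> \<alpha> \<and>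
       (\<forall>i\<in>S. dist (u i) 0 \<le> \<alpha>) \<longrightarrow>
       N t (\<lambda>x. \<Prod>i\<in>S. hdot act (u i) f x) \<le> Kf m * exp (\<sigma> s * \<alpha>) ^ m * N s f ^ m))"
    by metis
  show ?thesis
  proof (intro exI[of _ "\<Sum>m\<in>{1..r}. Kf m"] conjI allI impI)
    show "0 \<le> (\<Sum>m\<in>{1..r}. Kf m)" using Kf by (simp add: sum_nonneg)
    fix S :: "nat set" and u :: "nat \<Rightarrow> 'h" and f and \<alpha> :: real
    assume H: "finite S \<and> S \<noteq> {} \<and> card S \<le> r \<and> f \<in> A \<and> 0 \<le> \<alpha> \<and> (\<forall>i\<in>S. dist (u i) 0 \<le> \<alpha>)"
    define m where "m = card S"
    have m: "1 \<le> m" "m \<le> r" using H unfolding m_def by (auto simp: card_gt_0_iff Suc_le_eq)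
    have b: "N t (\<lambda>x. \<Prod>i\<in>S. hdot act (u i) f x) \<le> Kf m * exp (\<sigma> s * \<alpha>) ^ m * N s f ^ m"
      using Kf m H unfolding m_def by blast
    have s1: "s \<ge> 1" using t ts by simp
    have X0: "0 \<le> exp (\<sigma> s * \<alpha>) ^ m * N s f ^ m"
      using N_nonneg[OF SF IA s1] H by simp
    have "Kf m \<le> (\<Sum>m\<in>{1..r}. Kf m)"
      by (rule member_le_sum) (use Kf m in auto)
    then have "Kf m * (exp (\<sigma> s * \<alpha>) ^ m * N s f ^ m) \<le> (\<Sum>m\<in>{1..r}. Kf m) * (exp (\<sigma> s * \<alpha>) ^ m * N s f ^ m)"
      by (rule mult_right_mono[OF _ X0])
    then show "N t (\<lambda>x. \<Prod>i\<in>S. hdot act (u i) f x) \<le> (\<Sum>m\<in>{1..r}. Kf m) * exp (\<sigma> s * \<alpha>) ^ card S * N s f ^ card S"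
      using b unfolding m_def mult.assoc by (rule order_trans[rotated])
  qed
qed

lemma diff_bound:
  fixes act :: "'h::{group_add,metric_space} \<Rightarrow> 'x \<Rightarrow> 'x" and h :: "nat \<Rightarrow> 'h"
  assumes G: "lcsc_left_inv_metric_group TYPE('h)" and PS: "prob_space M" and MP: "mp_action M act"
    and IA: "invariant_subalgebra M act A" and SF: "seminorm_family M act A N \<sigma>"
    and KG0: "KG \<ge> 0"
    and KG: "\<forall>(S::nat set) (u::nat \<Rightarrow> 'h) f (\<alpha>::real). finite S \<and> S \<noteq> {} \<and> card S \<le> r \<and> f \<in> A \<and> 0 \<le> \<alpha> \<and>
       (\<forall>i\<in>S. dist (u i) 0 \<le> \<alpha>) \<longrightarrow>
       N t (\<lambda>x. \<Prod>i\<in>S. hdot act (u i) f x) \<le> KG * exp (\<sigma> s * \<alpha>) ^ card S * N s f ^ card S"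
    and CM0: "CMax \<ge> 0"
    and CM: "\<forall>k. 2 \<le> k \<and> k \<le> r \<longrightarrow> (\<forall>(K::nat set set) fs (hs::nat set \<Rightarrow> 'h). finite K \<and> card K = k \<and> (\<forall>j\<in>K. fs j \<in> A) \<longrightarrow>
     \<bar>integral\<^sup>L M (\<lambda>x. \<Prod>j\<in>K. hdot act (hs j) (fs j) x) - (\<Prod>j\<in>K. integral\<^sup>L M (fs j))\<bar>
     \<le> CMax * exp (- \<delta> k * Min {dist (hs a) (hs b) | a b. a \<in> K \<and> b \<in> K \<and> a \<noteq> b})
         * (\<Prod>j\<in>K. N t (fs j)))"
    and dmono: "\<forall>k. 2 \<le> k \<and> k \<le> r \<longrightarrow> \<delta> r \<le> \<delta> k" and dpos: "\<delta> r > 0"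
    and sig: "\<sigma> s > 0" and t1: "t \<ge> 1" and s1: "s \<ge> 1"
    and al: "0 \<le> \<alpha>" "\<alpha> < \<beta>"
    and Q: "partition_on {1..r} Q" and hD: "h \<in> Delta Q \<alpha> \<beta>" and fA: "f \<in> A"
    and I: "I \<subseteq> {1..r}" "I \<noteq> {}"
  shows "\<bar>psi M act f h I - psiQ M act f h Q I\<bar>
     \<le> CMax * max 1 KG ^ r * exp (- \<delta> r * \<beta>) * exp (\<sigma> s * \<alpha>) ^ r * N s f ^ card I"
proof -
  define E where "E = exp (\<sigma> s * \<alpha>)"
  define L where "L = N s f"
  have L0: "0 \<le> L" unfolding L_def by (rule N_nonneg[OF SF IA s1 fA])
  have E1: "1 \<le> E" unfolding E_def using sig al by simp
  have RHS0: "0 \<le> CMax * max 1 KG ^ r * exp (- \<delta> r * \<beta>) * exp (\<sigma> s * \<alpha>) ^ r * N s f ^ card I"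
    using CM0 L0 unfolding L_def by simp
  have fQ: "finite Q" using partition_finite[OF Q] by simp
  have fI: "finite I" using I finite_subset by blast
  have cIr: "card I \<le> r" using card_mono[OF _ I(1)] by simp
  have UQ: "\<Union>Q = {1..r}" using Q unfolding partition_on_def by blast
  have disjQ: "\<And>J J'. J \<in> Q \<Longrightarrow> J' \<in> Q \<Longrightarrow> J \<noteq> J' \<Longrightarrow> J \<inter> J' = {}"
    using Q unfolding partition_on_def disjoint_def by blast
  have coverI: "\<And>i. i \<in> I \<Longrightarrow> \<exists>J\<in>Q. i \<in> J" using I UQ by blast
  define Qi where "Qi = {J\<in>Q. I \<inter> J \<noteq> {}}"
  have QiQ: "Qi \<subseteq> Q" unfolding Qi_def by blast
  have fQi: "finite Qi" using fQ QiQ finite_subset by blast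
  have psiQ_eq: "psiQ M act f h Q I = (\<Prod>J\<in>Qi. psi M act f h (I \<inter> J))"
    unfolding psiQ_def
    by (rule prod.mono_neutral_right[OF fQ QiQ]) (auto simp: Qi_def psi_def)
  have sumQi: "(\<Sum>J\<in>Qi. card (I \<inter> J)) = card I"
  proof -
    have "(\<Sum>J\<in>Qi. card (I \<inter> J)) = (\<Sum>J\<in>Q. card (I \<inter> J))"
      by (rule sum.mono_neutral_left[OF fQ QiQ]) (auto simp: Qi_def)
    also have "\<dots> = card I" by (rule sum_card_inter[OF Q _ I(1)]) simp
    finally show ?thesis .
  qed
  have UI: "(\<Union>J\<in>Qi. I \<inter> J) = I" using coverI unfolding Qi_def by blast
  obtain i0 where i0: "i0 \<in> I" using I(2) by blast
  then obtain J0 where J0: "J0 \<in> Q" "i0 \<in> J0" using coverI by blast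
  have J0Qi: "J0 \<in> Qi" using J0 i0 unfolding Qi_def by blast
  show ?thesis
  proof (cases "card Qi \<le> 1")
    case True
    have "card Qi \<noteq> 0" using J0Qi fQi by auto
    then have "card Qi = 1" using True by simp
    then have "card Qi = Suc 0" by simp
    then obtain x where "Qi = {x}" by (auto simp: card_Suc_eq)
    then have Qi1: "Qi = {J0}" using J0Qi by simp
    have "I \<subseteq> J0"
    proof
      fix i assume i: "i \<in> I"
      then obtain J where "J \<in> Q" "i \<in> J" using coverI by blast
      then have "J \<in> Qi" using i unfolding Qi_def by blast
      then show "i \<in> J0" using Qi1 \<open>i \<in> J\<close> by simp
    qed
    then have "psiQ M act f h Q I = psi M act f h I" using psiQ_eq Qi1 by (simp add: Int_absorb2)
    then show ?thesis using RHS0 by simp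
  next
    case False
    define k where "k = card Qi"
    have k2: "2 \<le> k" using False unfolding k_def by simp
    have "k = (\<Sum>J\<in>Qi. 1)" unfolding k_def by simp
    also have "\<dots> \<le> (\<Sum>J\<in>Qi. card (I \<inter> J))"
    proof (rule sum_mono)
      fix J assume "J \<in> Qi"
      then have "I \<inter> J \<noteq> {}" "finite (I \<inter> J)" using fI unfolding Qi_def by auto
      then show "1 \<le> card (I \<inter> J)" by (simp add: Suc_le_eq card_gt_0_iff)
    qed
    finally have kI: "k \<le> card I" using sumQi by simp
    have kr: "k \<le> r" using kI cIr by simp
    define rep where "rep = (\<lambda>J. SOME i. i \<in> I \<inter> J)"
    have rep: "\<And>J. J \<in> Qi \<Longrightarrow> rep J \<in> I \<inter> J"
      unfolding rep_def Qi_def by (rule someI_ex) blast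
    define g where "g = (\<lambda>J y. \<Prod>i\<in>I \<inter> J. hdot act (- h (rep J) + h i) f y)"
    have gA: "\<And>J. J \<in> Qi \<Longrightarrow> g J \<in> A"
    proof -
      fix J assume J: "J \<in> Qi"
      have "finite (I \<inter> J)" "I \<inter> J \<noteq> {}" using fI J unfolding Qi_def by auto
      then show "g J \<in> A" unfolding g_def by (rule prod_hdot_in_A[OF IA fA])
    qed
    have gm: "\<And>J. J \<in> Qi \<Longrightarrow> g J \<in> borel_measurable M"
      using gA IA unfolding invariant_subalgebra_def by blast
    have mix: "\<bar>integral\<^sup>L M (\<lambda>x. \<Prod>J\<in>Qi. hdot act (h (rep J)) (g J) x) - (\<Prod>J\<in>Qi. integral\<^sup>L M (g J))\<bar>
     \<le> CMax * exp (- \<delta> k * Min {dist (h (rep a)) (h (rep b)) | a b. a \<in> Qi \<and> b \<in> Qi \<and> a \<noteq> b})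
         * (\<Prod>J\<in>Qi. N t (g J))"
    proof -
      have pre: "finite Qi \<and> card Qi = k \<and> (\<forall>j\<in>Qi. g j \<in> A)" using fQi gA k_def by blast
      show ?thesis using CM[rule_format, OF conjI[OF k2 kr], OF pre] .
    qed
    have E1': "integral\<^sup>L M (\<lambda>x. \<Prod>J\<in>Qi. hdot act (h (rep J)) (g J) x) = psi M act f h I"
    proof -
      have "integral\<^sup>L M (\<lambda>x. \<Prod>J\<in>Qi. hdot act (h (rep J)) (g J) x)
          = integral\<^sup>L M (\<lambda>x. \<Prod>i\<in>I. hdot act (h i) f x)"
      proof (rule Bochner_Integration.integral_cong[OF refl])
        fix x assume x: "x \<in> space M"
        have "(\<Prod>J\<in>Qi. hdot act (h (rep J)) (g J) x) = (\<Prod>J\<in>Qi. \<Prod>i\<in>I \<inter> J. hdot act (h i) f x)"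
          unfolding g_def by (rule prod.cong[OF refl], rule hdot_shift[OF MP x])
        also have "\<dots> = (\<Prod>i\<in>(\<Union>J\<in>Qi. I \<inter> J). hdot act (h i) f x)"
        proof (rule prod.UNION_disjoint[symmetric, OF fQi])
          show "\<forall>J\<in>Qi. finite (I \<inter> J)" using fI by blast
          show "\<forall>J\<in>Qi. \<forall>J'\<in>Qi. J \<noteq> J' \<longrightarrow> I \<inter> J \<inter> (I \<inter> J') = {}"
            using disjQ QiQ by blast
        qed
        finally show "(\<Prod>J\<in>Qi. hdot act (h (rep J)) (g J) x) = (\<Prod>i\<in>I. hdot act (h i) f x)"
          unfolding UI .
      qed
      then show ?thesis unfolding psi_def using I(2) by simp
    qed
    have E2: "(\<Prod>J\<in>Qi. integral\<^sup>L M (g J)) = psiQ M act f h Q I"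
      unfolding psiQ_eq
    proof (rule prod.cong[OF refl])
      fix J assume J: "J \<in> Qi"
      have "integral\<^sup>L M (g J) = integral\<^sup>L M (hdot act (h (rep J)) (g J))"
        by (rule integral_hdot[OF MP gm[OF J], symmetric])
      also have "\<dots> = integral\<^sup>L M (\<lambda>x. \<Prod>i\<in>I \<inter> J. hdot act (h i) f x)"
        unfolding g_def by (rule Bochner_Integration.integral_cong[OF refl], rule hdot_shift[OF MP])
      also have "\<dots> = psi M act f h (I \<inter> J)" unfolding psi_def using J unfolding Qi_def by simp
      finally show "integral\<^sup>L M (g J) = psi M act f h (I \<inter> J)" .
    qed
    define D where "D = {dist (h (rep a)) (h (rep b)) | a b. a \<in> Qi \<and> b \<in> Qi \<and> a \<noteq> b}"
    have fD: "finite D"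
    proof -
      have "D \<subseteq> (\<lambda>(a, b). dist (h (rep a)) (h (rep b))) ` (Qi \<times> Qi)" unfolding D_def by auto
      then show ?thesis using fQi finite_subset by blast
    qed
    have neD: "D \<noteq> {}"
    proof -
      have "\<exists>J1\<in>Qi. J1 \<noteq> J0"
      proof (rule ccontr)
        assume "\<not> (\<exists>J1\<in>Qi. J1 \<noteq> J0)"
        then have "Qi \<subseteq> {J0}" by blast
        then have "card Qi \<le> 1" using card_mono[of "{J0}" Qi] by simp
        then show False using False by simp
      qed
      then obtain J1 where "J1 \<in> Qi" "J1 \<noteq> J0" by blast
      then show ?thesis unfolding D_def using J0Qi by blast
    qed
    have Dgt: "\<forall>d\<in>D. \<beta> < d"
    proof
      fix d assume "d \<in> D"
      then obtain a b where ab: "d = dist (h (rep a)) (h (rep b))" "a \<in> Qi" "b \<in> Qi" "a \<noteq> b"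
        unfolding D_def by blast
      have "rep a \<in> a" "rep b \<in> b" using rep ab by auto
      then have "ereal d \<in> {ereal (dist (h i) (h j)) | I J i j. I \<in> Q \<and> J \<in> Q \<and> I \<noteq> J \<and> i \<in> I \<and> j \<in> J}"
        using ab QiQ by blast
      then have "d_low Q h \<le> ereal d" unfolding d_low_def by (rule Inf_lower)
      moreover have "ereal \<beta> < d_low Q h" using hD unfolding Delta_def by simp
      ultimately have "ereal \<beta> < ereal d" by (meson less_le_trans)
      then show "\<beta> < d" by simp
    qed
    have minD: "\<beta> \<le> Min D" using Min_gr_iff[OF fD neD] Dgt by (simp add: less_imp_le)
    have b0: "0 \<le> \<beta>" using al by simp
    have dk: "\<delta> r \<le> \<delta> k" using dmono k2 kr by blast
    have "\<delta> r * \<beta> \<le> \<delta> k * Min D"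
      by (rule mult_mono[OF dk minD]) (use dk dpos b0 in auto)
    then have expb: "exp (- \<delta> k * Min D) \<le> exp (- \<delta> r * \<beta>)" by simp
    have Nb: "N t (g J) \<le> KG * E ^ card (I \<inter> J) * L ^ card (I \<inter> J)" if J: "J \<in> Qi" for J
    proof -
      have pre: "finite (I \<inter> J) \<and> I \<inter> J \<noteq> {} \<and> card (I \<inter> J) \<le> r \<and> f \<in> A \<and> 0 \<le> \<alpha> \<and>
         (\<forall>i\<in>I \<inter> J. dist (- h (rep J) + h i) 0 \<le> \<alpha>)"
      proof (intro conjI ballI)
        show "finite (I \<inter> J)" using fI by blast
        show "I \<inter> J \<noteq> {}" using J unfolding Qi_def by blast
        show "card (I \<inter> J) \<le> r" using card_mono[OF fI, of "I \<inter> J"] cIr by simp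
        show "f \<in> A" by (rule fA)
        show "0 \<le> \<alpha>" by (rule al)
        fix i assume i: "i \<in> I \<inter> J"
        have "dist (- h (rep J) + h i) 0 = dist (h i) (h (rep J))" by (rule dist_shift[OF G])
        moreover have "ereal (dist (h i) (h (rep J))) \<le> d_up Q h"
          unfolding d_up_def by (rule Sup_upper) (use i rep[OF J] J QiQ in blast)
        moreover have "d_up Q h \<le> ereal \<alpha>" using hD unfolding Delta_def by simp
        ultimately have "ereal (dist (h i) (h (rep J))) \<le> ereal \<alpha>" "dist (- h (rep J) + h i) 0 = dist (h i) (h (rep J))"
          using order_trans by blast+
        then show "dist (- h (rep J) + h i) 0 \<le> \<alpha>" by simp
      qed
      show ?thesis using KG[rule_format, OF pre] unfolding g_def E_def L_def .
    qed
    have Nn: "\<And>J. J \<in> Qi \<Longrightarrow> 0 \<le> N t (g J)" using N_nonneg[OF SF IA t1] gA by blast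
    have "(\<Prod>J\<in>Qi. N t (g J)) \<le> (\<Prod>J\<in>Qi. KG * E ^ card (I \<inter> J) * L ^ card (I \<inter> J))"
      by (rule prod_mono) (use Nn Nb in blast)
    also have "\<dots> = KG ^ k * E ^ card I * L ^ card I"
    proof -
      have pE: "(\<Prod>J\<in>Qi. E ^ card (I \<inter> J)) = E ^ card I" unfolding power_sum[symmetric] sumQi ..
      have pL: "(\<Prod>J\<in>Qi. L ^ card (I \<inter> J)) = L ^ card I" unfolding power_sum[symmetric] sumQi ..
      show ?thesis unfolding prod.distrib k_def pE pL by simp
    qed
    also have "\<dots> \<le> max 1 KG ^ r * E ^ r * L ^ card I"
    proof (intro mult_right_mono mult_mono)
      have "KG ^ k \<le> max 1 KG ^ k" by (rule power_mono) (use KG0 in auto)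
      also have "\<dots> \<le> max 1 KG ^ r" by (rule power_increasing[OF kr]) simp
      finally show "KG ^ k \<le> max 1 KG ^ r" .
      show "E ^ card I \<le> E ^ r" by (rule power_increasing[OF cIr E1])
    qed (use E1 L0 in auto)
    finally have prodb: "(\<Prod>J\<in>Qi. N t (g J)) \<le> max 1 KG ^ r * E ^ r * L ^ card I" .
    have "\<bar>psi M act f h I - psiQ M act f h Q I\<bar>
       \<le> CMax * exp (- \<delta> k * Min D) * (\<Prod>J\<in>Qi. N t (g J))"
      using mix unfolding E1' E2 D_def .
    also have "\<dots> \<le> CMax * exp (- \<delta> r * \<beta>) * (max 1 KG ^ r * E ^ r * L ^ card I)"
      by (rule mult_mono[OF mult_left_mono[OF expb CM0] prodb])
         (use CM0 prod_nonneg[of Qi "\<lambda>J. N t (g J)"] Nn in auto)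
    finally show ?thesis unfolding E_def L_def by (simp add: mult_ac)
  qed
qed

theorem proposition7p2:
  fixes M :: "'x measure"
    and act :: "'h::{group_add,metric_space} \<Rightarrow> 'x \<Rightarrow> 'x"
    and A :: "('x \<Rightarrow> real) set"
    and N :: "nat \<Rightarrow> ('x \<Rightarrow> real) \<Rightarrow> real"
    and \<sigma> \<delta> :: "nat \<Rightarrow> real" and sk :: "nat \<Rightarrow> nat"
    and r s :: nat
  assumes "lcsc_left_inv_metric_group TYPE('h)"
    and "prob_space M"
    and "mp_action M act"
    and "invariant_subalgebra M act A"
    and "seminorm_family M act A N \<sigma>"
    and "exp_mixing_all_orders M act A N \<delta> sk"
    and "parameter_conventions \<sigma> sk \<delta>"
    and "r \<ge> 3"
    and "s > sk r + r"
  shows "\<exists>C. \<forall>\<alpha> \<beta> Q h f P. 0 \<le> \<alpha> \<longrightarrow> \<alpha> < \<beta> \<longrightarrow> partition_on {1..r} Q \<longrightarrow>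
           h \<in> Delta Q \<alpha> \<beta> \<longrightarrow> f \<in> A \<longrightarrow> P \<in> cyc_partitions r \<longrightarrow>
           \<bar>psi_tilde M act f h P - psiQ_tilde M act f h Q P\<bar>
             \<le> C * exp (- (\<beta> * \<delta> r - real r * \<alpha> * \<sigma> s)) * N s f ^ r"
proof -
  note G = assms(1) and PS = assms(2) and MP = assms(3) and IA = assms(4) and SF = assms(5)
    and EM = assms(6) and PC = assms(7) and r3 = assms(8) and sr = assms(9)
  have smono: "\<forall>a b. 1 \<le> a \<longrightarrow> a \<le> b \<longrightarrow> \<sigma> a \<le> \<sigma> b"
    using PC unfolding parameter_conventions_def by blast
  have skmono: "\<forall>k l. 2 \<le> k \<longrightarrow> k \<le> l \<longrightarrow> sk k \<le> sk l"
    using PC unfolding parameter_conventions_def by blast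
  have dmono0: "\<forall>k l. 2 \<le> k \<longrightarrow> k \<le> l \<longrightarrow> \<delta> l \<le> \<delta> k"
    using PC unfolding parameter_conventions_def by blast
  have dmono: "\<forall>k. 2 \<le> k \<and> k \<le> r \<longrightarrow> \<delta> r \<le> \<delta> k" using dmono0 by blast
  have r2: "2 \<le> r" using r3 by simp
  have dpos: "\<delta> r > 0" using EM r2 unfolding exp_mixing_all_orders_def by blast
  have s1: "s \<ge> 1" using sr by simp
  have sig: "\<sigma> s > 0" using SF s1 unfolding seminorm_family_def by blast
  define t where "t = sk r + 1"
  have t1: "t \<ge> 1" unfolding t_def by simp
  have ts: "t + r \<le> s" using sr unfolding t_def by simp
  obtain KG where KG0: "KG \<ge> 0" and KG: "\<forall>(S::nat set) (u::nat \<Rightarrow> 'h) f (\<alpha>::real). finite S \<and> S \<noteq> {} \<and> card S \<le> r \<and> f \<in> A \<and> 0 \<le> \<alpha> \<and>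
       (\<forall>i\<in>S. dist (u i) 0 \<le> \<alpha>) \<longrightarrow>
       N t (\<lambda>x. \<Prod>i\<in>S. hdot act (u i) f x) \<le> KG * exp (\<sigma> s * \<alpha>) ^ card S * N s f ^ card S"
    using prodhdot_bound[OF SF IA smono t1 ts] by blast
  have "\<forall>k. \<exists>C. C \<ge> 0 \<and> (2 \<le> k \<and> k \<le> r \<longrightarrow> (\<forall>(K::nat set set) fs (hs::nat set \<Rightarrow> 'h). finite K \<and> card K = k \<and> (\<forall>j\<in>K. fs j \<in> A) \<longrightarrow>
     \<bar>integral\<^sup>L M (\<lambda>x. \<Prod>j\<in>K. hdot act (hs j) (fs j) x) - (\<Prod>j\<in>K. integral\<^sup>L M (fs j))\<bar>
     \<le> C * exp (- \<delta> k * Min {dist (hs a) (hs b) | a b. a \<in> K \<and> b \<in> K \<and> a \<noteq> b})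
         * (\<Prod>j\<in>K. N t (fs j))))"
  proof
    fix k :: nat
    show "\<exists>C. C \<ge> 0 \<and> (2 \<le> k \<and> k \<le> r \<longrightarrow> (\<forall>(K::nat set set) fs (hs::nat set \<Rightarrow> 'h). finite K \<and> card K = k \<and> (\<forall>j\<in>K. fs j \<in> A) \<longrightarrow>
     \<bar>integral\<^sup>L M (\<lambda>x. \<Prod>j\<in>K. hdot act (hs j) (fs j) x) - (\<Prod>j\<in>K. integral\<^sup>L M (fs j))\<bar>
     \<le> C * exp (- \<delta> k * Min {dist (hs a) (hs b) | a b. a \<in> K \<and> b \<in> K \<and> a \<noteq> b})
         * (\<Prod>j\<in>K. N t (fs j))))"
    proof (cases "2 \<le> k \<and> k \<le> r")
      case True
      have k2: "2 \<le> k" using True by simp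
      have "sk k \<le> sk r" using skmono True by blast
      then have tk: "t > sk k" unfolding t_def by simp
      show ?thesis using mixing_set[OF EM SF IA k2 tk] True by blast
    next
      case False
      then show ?thesis by blast
    qed
  qed
  then have "\<exists>CMf. \<forall>k. CMf k \<ge> 0 \<and> (2 \<le> k \<and> k \<le> r \<longrightarrow> (\<forall>(K::nat set set) fs (hs::nat set \<Rightarrow> 'h). finite K \<and> card K = k \<and> (\<forall>j\<in>K. fs j \<in> A) \<longrightarrow>
     \<bar>integral\<^sup>L M (\<lambda>x. \<Prod>j\<in>K. hdot act (hs j) (fs j) x) - (\<Prod>j\<in>K. integral\<^sup>L M (fs j))\<bar>
     \<le> CMf k * exp (- \<delta> k * Min {dist (hs a) (hs b) | a b. a \<in> K \<and> b \<in> K \<and> a \<noteq> b})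
         * (\<Prod>j\<in>K. N t (fs j))))"
    by (rule choice)
  then obtain CMf where CMf: "\<forall>k. CMf k \<ge> 0 \<and> (2 \<le> k \<and> k \<le> r \<longrightarrow> (\<forall>(K::nat set set) fs (hs::nat set \<Rightarrow> 'h). finite K \<and> card K = k \<and> (\<forall>j\<in>K. fs j \<in> A) \<longrightarrow>
     \<bar>integral\<^sup>L M (\<lambda>x. \<Prod>j\<in>K. hdot act (hs j) (fs j) x) - (\<Prod>j\<in>K. integral\<^sup>L M (fs j))\<bar>
     \<le> CMf k * exp (- \<delta> k * Min {dist (hs a) (hs b) | a b. a \<in> K \<and> b \<in> K \<and> a \<noteq> b})
         * (\<Prod>j\<in>K. N t (fs j))))"
    ..
  define CMax where "CMax = (\<Sum>k\<in>{2..r}. CMf k)"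
  have CM0: "CMax \<ge> 0" unfolding CMax_def using CMf by (simp add: sum_nonneg)
  have CM: "\<forall>k. 2 \<le> k \<and> k \<le> r \<longrightarrow> (\<forall>(K::nat set set) fs (hs::nat set \<Rightarrow> 'h). finite K \<and> card K = k \<and> (\<forall>j\<in>K. fs j \<in> A) \<longrightarrow>
     \<bar>integral\<^sup>L M (\<lambda>x. \<Prod>j\<in>K. hdot act (hs j) (fs j) x) - (\<Prod>j\<in>K. integral\<^sup>L M (fs j))\<bar>
     \<le> CMax * exp (- \<delta> k * Min {dist (hs a) (hs b) | a b. a \<in> K \<and> b \<in> K \<and> a \<noteq> b})
         * (\<Prod>j\<in>K. N t (fs j)))"
  proof (intro allI impI)
    fix k :: nat and K :: "nat set set" and fs and hs :: "nat set \<Rightarrow> 'h"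
    assume k: "2 \<le> k \<and> k \<le> r" and H: "finite K \<and> card K = k \<and> (\<forall>j\<in>K. fs j \<in> A)"
    have b: "\<bar>integral\<^sup>L M (\<lambda>x. \<Prod>j\<in>K. hdot act (hs j) (fs j) x) - (\<Prod>j\<in>K. integral\<^sup>L M (fs j))\<bar>
     \<le> CMf k * (exp (- \<delta> k * Min {dist (hs a) (hs b) | a b. a \<in> K \<and> b \<in> K \<and> a \<noteq> b})
         * (\<Prod>j\<in>K. N t (fs j)))"
      using CMf k H unfolding mult.assoc by blast
    have X0: "0 \<le> exp (- \<delta> k * Min {dist (hs a) (hs b) | a b. a \<in> K \<and> b \<in> K \<and> a \<noteq> b})
         * (\<Prod>j\<in>K. N t (fs j))"
    proof -
      have "0 \<le> (\<Prod>j\<in>K. N t (fs j))" by (rule prod_nonneg) (use H N_nonneg[OF SF IA t1] in blast)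
      then show ?thesis by simp
    qed
    have "CMf k \<le> CMax" unfolding CMax_def by (rule member_le_sum) (use CMf k in auto)
    then have "CMf k * (exp (- \<delta> k * Min {dist (hs a) (hs b) | a b. a \<in> K \<and> b \<in> K \<and> a \<noteq> b})
         * (\<Prod>j\<in>K. N t (fs j))) \<le> CMax * (exp (- \<delta> k * Min {dist (hs a) (hs b) | a b. a \<in> K \<and> b \<in> K \<and> a \<noteq> b})
         * (\<Prod>j\<in>K. N t (fs j)))" by (rule mult_right_mono[OF _ X0])
    then show "\<bar>integral\<^sup>L M (\<lambda>x. \<Prod>j\<in>K. hdot act (hs j) (fs j) x) - (\<Prod>j\<in>K. integral\<^sup>L M (fs j))\<bar>
     \<le> CMax * exp (- \<delta> k * Min {dist (hs a) (hs b) | a b. a \<in> K \<and> b \<in> K \<and> a \<noteq> b})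
         * (\<Prod>j\<in>K. N t (fs j))" using b unfolding mult.assoc by (rule order_trans[rotated])
  qed
  obtain C0 where C01: "C0 \<ge> 1" and C0: "\<forall>f\<in>A. AE x in M. \<bar>f x\<bar> \<le> C0 * N s f"
    using N_Linf[OF SF IA s1] by blast
  show ?thesis
  proof (intro exI[of _ "real r * CMax * max 1 KG ^ r * C0 ^ r"] allI impI)
    fix \<alpha> \<beta> :: real and Q and h :: "nat \<Rightarrow> 'h" and f P
    assume al0: "0 \<le> \<alpha>" and alb: "\<alpha> < \<beta>" and Q: "partition_on {1..r} Q"
      and hD: "h \<in> Delta Q \<alpha> \<beta>" and fA: "f \<in> A" and P: "P \<in> cyc_partitions r"
    define L where "L = N s f"
    have L0: "0 \<le> L" unfolding L_def by (rule N_nonneg[OF SF IA s1 fA])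
    define B where "B = C0 * L"
    have B0: "0 \<le> B" unfolding B_def using C01 L0 by simp
    have AEf: "AE x in M. \<bar>f x\<bar> \<le> B" unfolding B_def L_def using C0 fA by blast
    have SP: "partition_on {1..r} (set P)" using P unfolding cyc_partitions_def by blast
    have Psub: "\<And>I. I \<in> set P \<Longrightarrow> I \<subseteq> {1..r} \<and> I \<noteq> {}"
      using SP unfolding partition_on_def by blast
    define W where "W = CMax * max 1 KG ^ r * exp (- \<delta> r * \<beta>) * exp (\<sigma> s * \<alpha>) ^ r"
    have W0: "0 \<le> W" unfolding W_def using CM0 by simp
    have Db: "\<bar>psi M act f h I - psiQ M act f h Q I\<bar> \<le> W * L ^ card I" if I: "I \<in> set P" for I
      using diff_bound[OF G PS MP IA SF KG0 KG CM0 CM dmono dpos sig t1 s1 al0 alb Q hD fA]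
        Psub[OF I] unfolding W_def L_def by blast
    have fin: "\<And>I. I \<in> set P \<Longrightarrow> finite I" using Psub finite_subset by blast
    have sumP: "(\<Sum>I\<in>set P. card I) = r"
    proof -
      have "card (\<Union>(set P)) = (\<Sum>I\<in>set P. card I)"
        by (rule card_Union_disjoint) (use SP fin in \<open>auto simp: partition_on_def\<close>)
      moreover have "\<Union>(set P) = {1..r}" using SP unfolding partition_on_def by blast
      ultimately show ?thesis by simp
    qed
    have "\<bar>psi_tilde M act f h P - psiQ_tilde M act f h Q P\<bar>
        \<le> (\<Sum>I\<in>set P. \<bar>psi M act f h I - psiQ M act f h Q I\<bar> * (\<Prod>I'\<in>set P-{I}. B ^ card I'))"
      unfolding psi_tilde_def psiQ_tilde_def
    proof (rule telescope)
      fix I assume I: "I \<in> set P"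
      show "\<bar>psi M act f h I\<bar> \<le> B ^ card I \<and> \<bar>psiQ M act f h Q I\<bar> \<le> B ^ card I"
        using psi_bound[OF PS MP IA fA AEf fin[OF I]] psiQ_bound[OF PS MP IA fA AEf Q _ conjunct1[OF Psub[OF I]]]
        by simp
    qed simp
    also have "\<dots> \<le> (\<Sum>I\<in>set P. W * C0 ^ r * L ^ r)"
    proof (rule sum_mono)
      fix I assume I: "I \<in> set P"
      have cI: "card I \<le> r" using sumP member_le_sum[OF I, of card] by simp
      have "(\<Prod>I'\<in>set P-{I}. B ^ card I') = B ^ (\<Sum>I'\<in>set P-{I}. card I')"
        by (simp add: power_sum)
      also have "(\<Sum>I'\<in>set P-{I}. card I') = r - card I"
        using sum_diff1_nat[of card "set P" I] I sumP by simp
      finally have pe: "(\<Prod>I'\<in>set P-{I}. B ^ card I') = C0 ^ (r - card I) * L ^ (r - card I)"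
        unfolding B_def by (simp add: power_mult_distrib)
      have p0: "0 \<le> (\<Prod>I'\<in>set P-{I}. B ^ card I')" using B0 by (simp add: prod_nonneg)
      have "\<bar>psi M act f h I - psiQ M act f h Q I\<bar> * (\<Prod>I'\<in>set P-{I}. B ^ card I')
          \<le> W * L ^ card I * (C0 ^ (r - card I) * L ^ (r - card I))"
        using mult_right_mono[OF Db[OF I] p0] unfolding pe .
      also have "\<dots> = W * C0 ^ (r - card I) * (L ^ card I * L ^ (r - card I))" by (simp add: mult_ac)
      also have "L ^ card I * L ^ (r - card I) = L ^ r" using cI by (simp add: power_add[symmetric])
      also have "W * C0 ^ (r - card I) * L ^ r \<le> W * C0 ^ r * L ^ r"
        by (intro mult_right_mono mult_left_mono power_increasing) (use C01 W0 L0 in auto)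
      finally show "\<bar>psi M act f h I - psiQ M act f h Q I\<bar> * (\<Prod>I'\<in>set P-{I}. B ^ card I') \<le> W * C0 ^ r * L ^ r" .
    qed
    also have "\<dots> = real (card (set P)) * (W * C0 ^ r * L ^ r)" by simp
    also have "\<dots> \<le> real r * (W * C0 ^ r * L ^ r)"
    proof (rule mult_right_mono)
      have "card (set P) = (\<Sum>I\<in>set P. 1)" by simp
      also have "\<dots> \<le> (\<Sum>I\<in>set P. card I)"
      proof (rule sum_mono)
        fix I assume I: "I \<in> set P"
        then show "1 \<le> card I" using Psub[OF I] fin[OF I] by (simp add: Suc_le_eq card_gt_0_iff)
      qed
      finally show "real (card (set P)) \<le> real r" using sumP by simp
    qed (use W0 C01 L0 in simp)
    also have "\<dots> = real r * CMax * max 1 KG ^ r * C0 ^ r * exp (- (\<beta> * \<delta> r - real r * \<alpha> * \<sigma> s)) * N s f ^ r"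
    proof -
      have "exp (- \<delta> r * \<beta>) * exp (\<sigma> s * \<alpha>) ^ r = exp (- (\<beta> * \<delta> r - real r * \<alpha> * \<sigma> s))"
        by (simp add: exp_of_nat_mult[symmetric] exp_add[symmetric] algebra_simps)
      then show ?thesis unfolding W_def L_def by (simp add: mult_ac)
    qed
    finally show "\<bar>psi_tilde M act f h P - psiQ_tilde M act f h Q P\<bar>
             \<le> real r * CMax * max 1 KG ^ r * C0 ^ r * exp (- (\<beta> * \<delta> r - real r * \<alpha> * \<sigma> s)) * N s f ^ r" .
  qed
qed

end
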